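(* Let $n\ge3$. For $\alpha\in[1,\sqrt2]$ the center density of $D_n^\alpha$ satisfies $\delta(\mathbb{Z}^n)\le\delta(D_n^\alpha)\le\delta(D_n)$, i.e. $2^{-n}\le\delta(D_n^\alpha)\le 2^{-n/2-1}$, with the upper bound attained at $\alpha=1$ and the lower bound at $\alpha=\sqrt2$. Moreover, $\alpha\mapsto\delta(D_n^\alpha)$ is strictly decreasing on $[1,\sqrt2]$.
   Context: Let $\mathbf{e}_1,\dots,\mathbf{e}_n$ be the standard basis of $\mathbb{R}^n$. For $n\ge3$, $1\le\alpha\le\sqrt2$ and $\overline\alpha:=\sqrt{2-\alpha^2}$, $D_n^\alpha$ is the lattice with basis $\mathbf{b}_1=\alpha\mathbf{e}_1+\overline\alpha\mathbf{e}_2$, $\mathbf{b}_2=\alpha\mathbf{e}_2+\overline\alpha\mathbf{e}_3$, $\mathbf{b}_3=\overline\alpha\mathbf{e}_1+\alpha\mathbf{e}_3$, $\mathbf{b}_4=\overline\alpha\mathbf{e}_3-\alpha\mathbf{e}_4$, and $\mathbf{b}_k=\overline\alpha\mathbf{e}_{k-1}-\alpha\mathbf{e}_k$ for $5\le k\le n$; $D_n^1=D_n=\{\mathbf{x}\in\mathbb{Z}^n:\sum x_i\equiv0\pmod 2\}$ up to congruence and $D_n^{\sqrt2}=\sqrt2\mathbb{Z}^n$. Center density: $\delta(\Lambda)=\lambda_1(\Lambda)^n/(2^n\operatorname{vol}(\Lambda))$. *)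

theory Defs
  imports Complex_Main "Jordan_Normal_Form.Determinant"
begin

text \<open>Vectors of R^n are represented as functions nat => real, with coordinates indexed by 1..n
  (all other coordinates are 0 for the vectors considered here).\<close>

definition std_e :: "nat \<Rightarrow> nat \<Rightarrow> real" where
  "std_e i = (\<lambda>j. if j = i then 1 else 0)"

definition alpha_bar :: "real \<Rightarrow> real" where
  "alpha_bar a = sqrt (2 - a\<^sup>2)"

definition Dalpha_basis :: "real \<Rightarrow> nat \<Rightarrow> nat \<Rightarrow> real" where
  "Dalpha_basis a k =
     (if k = 1 then (\<lambda>j. a * std_e 1 j + alpha_bar a * std_e 2 j)
      else if k = 2 then (\<lambda>j. a * std_e 2 j + alpha_bar a * std_e 3 j)
      else if k = 3 then (\<lambda>j. alpha_bar a * std_e 1 j + a * std_e 3 j)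
      else if k = 4 then (\<lambda>j. alpha_bar a * std_e 3 j - a * std_e 4 j)
      else (\<lambda>j. alpha_bar a * std_e (k - 1) j - a * std_e k j))"

definition lattice_of :: "nat \<Rightarrow> (nat \<Rightarrow> nat \<Rightarrow> real) \<Rightarrow> (nat \<Rightarrow> real) set" where
  "lattice_of n b = {v. \<exists>c :: nat \<Rightarrow> int. v = (\<lambda>i. \<Sum>k = 1..n. of_int (c k) * b k i)}"

definition vnorm :: "nat \<Rightarrow> (nat \<Rightarrow> real) \<Rightarrow> real" where
  "vnorm n v = sqrt (\<Sum>i = 1..n. (v i)\<^sup>2)"

definition lambda1 :: "nat \<Rightarrow> (nat \<Rightarrow> nat \<Rightarrow> real) \<Rightarrow> real" where
  "lambda1 n b = Inf {vnorm n v | v. v \<in> lattice_of n b \<and> (\<exists>i\<in>{1..n}. v i \<noteq> 0)}"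

definition covol :: "nat \<Rightarrow> (nat \<Rightarrow> nat \<Rightarrow> real) \<Rightarrow> real" where
  "covol n b = \<bar>det (mat n n (\<lambda>(k, i). b (k + 1) (i + 1)))\<bar>"

definition center_density :: "nat \<Rightarrow> (nat \<Rightarrow> nat \<Rightarrow> real) \<Rightarrow> real" where
  "center_density n b = lambda1 n b ^ n / (2 ^ n * covol n b)"

end

theory Submission
  imports Defs
begin


lemma detM: "det (mat (Suc n) (Suc n) f :: real mat) =
  (\<Sum>i<Suc n. f (i,n) * (-1)^(i+n) * det (mat n n (\<lambda>(i',j'). f (if i'<i then i' else Suc i', j'))))"
proof -
  have "det (mat (Suc n) (Suc n) f :: real mat) = (\<Sum>i<Suc n. (mat (Suc n) (Suc n) f) $$ (i,n) * cofactor (mat (Suc n) (Suc n) f) i n)"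
    by (rule laplace_expansion_column) auto
  also have "\<dots> = (\<Sum>i<Suc n. f (i,n) * (-1)^(i+n) * det (mat n n (\<lambda>(i',j'). f (if i'<i then i' else Suc i', j'))))"
  proof (rule sum.cong[OF refl])
    fix i assume i: "i \<in> {..<Suc n}"
    have "mat_delete (mat (Suc n) (Suc n) f) i n = mat n n (\<lambda>(i',j'). f (if i'<i then i' else Suc i', j'))"
      unfolding mat_delete_def by (rule eq_matI) auto
    then show "(mat (Suc n) (Suc n) f) $$ (i,n) * cofactor (mat (Suc n) (Suc n) f) i n = f (i,n) * (-1)^(i+n) * det (mat n n (\<lambda>(i',j'). f (if i'<i then i' else Suc i', j')))"
      using i unfolding cofactor_def by simp
  qed
  finally show ?thesis .
qed

lemma det0: "det (mat 0 0 f :: real mat) = 1" by simp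

lemma det3: "det (mat 3 3 f :: real mat) = f(0,0)*f(1,1)*f(2,2) - f(0,0)*f(2,1)*f(1,2) - f(1,0)*f(0,1)*f(2,2) + f(1,0)*f(2,1)*f(0,2) + f(2,0)*f(0,1)*f(1,2) - f(2,0)*f(1,1)*f(0,2)"
  by (simp add: numeral_3_eq_3 numeral_2_eq_2 detM lessThan_Suc algebra_simps)




lemma ab_facts:
  assumes "1 \<le> a" "a \<le> sqrt 2"
  shows "0 \<le> alpha_bar a" "(alpha_bar a)\<^sup>2 = 2 - a\<^sup>2" "alpha_bar a \<le> 1" "alpha_bar a \<le> a"
proof -
  have "a\<^sup>2 \<le> (sqrt 2)\<^sup>2" using assms by (intro power_mono) auto
  moreover have "(sqrt 2)\<^sup>2 = (2::real)" by simp
  ultimately have a2: "a\<^sup>2 \<le> 2" by linarith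
  show "0 \<le> alpha_bar a" unfolding alpha_bar_def using a2 by simp
  show sq: "(alpha_bar a)\<^sup>2 = 2 - a\<^sup>2" unfolding alpha_bar_def by (rule real_sqrt_pow2) (use a2 in linarith)
  have "1 \<le> a\<^sup>2" using assms by (simp add: one_le_power)
  then have "(alpha_bar a)\<^sup>2 \<le> 1\<^sup>2" using sq by simp
  then show "alpha_bar a \<le> 1" using \<open>0 \<le> alpha_bar a\<close> by (simp add: power_le_one_iff abs_le_square_iff)
  then show "alpha_bar a \<le> a" using assms by simp
qed

lemma B_ge4: "k \<ge> 4 \<Longrightarrow> Dalpha_basis a k j = (if j = k - 1 then alpha_bar a else 0) - (if j = k then a else 0)"
  unfolding Dalpha_basis_def std_e_def by auto

lemma B_zero: "1 \<le> k \<Longrightarrow> k < j \<Longrightarrow> 4 \<le> j \<Longrightarrow> Dalpha_basis a k j = 0"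
  unfolding Dalpha_basis_def std_e_def by auto

definition Lv :: "real \<Rightarrow> nat \<Rightarrow> (nat \<Rightarrow> int) \<Rightarrow> nat \<Rightarrow> real" where
  "Lv a n c = (\<lambda>i. \<Sum>k = 1..n. of_int (c k) * Dalpha_basis a k i)"

definition F :: "real \<Rightarrow> nat \<Rightarrow> (nat \<Rightarrow> int) \<Rightarrow> int \<Rightarrow> real" where
  "F a n c t = (\<Sum>i = 1..n. (Lv a n c i + (if i = n then alpha_bar a * t else 0))\<^sup>2)"

lemma Lv_Suc: "Lv a (Suc n) c i = Lv a n c i + of_int (c (Suc n)) * Dalpha_basis a (Suc n) i"
  unfolding Lv_def by simp

lemma Lv_out: "n \<ge> 3 \<Longrightarrow> Lv a n c (Suc n) = 0"
  unfolding Lv_def by (rule sum.neutral) (auto simp: B_zero)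

lemma F_Suc:
  assumes "n \<ge> 3"
  shows "F a (Suc n) c t = F a n c (c (Suc n)) + (alpha_bar a * t - a * c (Suc n))\<^sup>2"
proof -
  have "F a (Suc n) c t = (\<Sum>i = 1..n. (Lv a (Suc n) c i)\<^sup>2) + (Lv a (Suc n) c (Suc n) + alpha_bar a * t)\<^sup>2"
    unfolding F_def by simp
  also have "(\<Sum>i = 1..n. (Lv a (Suc n) c i)\<^sup>2) = F a n c (c (Suc n))"
    unfolding F_def
  proof (rule sum.cong[OF refl])
    fix i assume i: "i \<in> {1..n}"
    have "Dalpha_basis a (Suc n) i = (if i = n then alpha_bar a else 0)"
      using assms i by (subst B_ge4) auto
    then show "(Lv a (Suc n) c i)\<^sup>2 = (Lv a n c i + (if i = n then alpha_bar a * c (Suc n) else 0))\<^sup>2"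
      by (simp add: Lv_Suc mult.commute)
  qed
  also have "Lv a (Suc n) c (Suc n) = - a * c (Suc n)"
    using assms by (simp add: Lv_Suc Lv_out B_ge4)
  finally show ?thesis by (simp add: algebra_simps)
qed

lemma F3: "F a 3 c t = (a * c 1 + alpha_bar a * c 3)\<^sup>2 + (alpha_bar a * c 1 + a * c 2)\<^sup>2
   + (alpha_bar a * c 2 + a * c 3 + alpha_bar a * t)\<^sup>2"
  unfolding F_def Lv_def Dalpha_basis_def std_e_def
  by (simp add: numeral_3_eq_3 numeral_2_eq_2 algebra_simps)




lemma sq_ge1: "(p::int) \<noteq> 0 \<Longrightarrow> (1::real) \<le> (of_int p)\<^sup>2"
proof -
  assume "p \<noteq> 0"
  then have "1 \<le> \<bar>real_of_int p\<bar>" by linarith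
  then have "1 * 1 \<le> \<bar>real_of_int p\<bar> * \<bar>real_of_int p\<bar>" by (intro mult_mono) auto
  then show ?thesis by (simp add: power2_eq_square)
qed

lemma sq_ge1i: "(p::int) \<noteq> 0 \<Longrightarrow> 1 \<le> p\<^sup>2"
proof -
  assume "p \<noteq> 0"
  then have "1 \<le> \<bar>p\<bar>" by linarith
  then have "1 * 1 \<le> \<bar>p\<bar> * \<bar>p\<bar>" by (intro mult_mono) auto
  then show ?thesis by (simp add: power2_eq_square)
qed

lemma signL:
  fixes x y :: real and p q :: int
  assumes "1 \<le> x" "0 \<le> y" "y \<le> 1" "p \<noteq> 0" "(x * p + y * q)\<^sup>2 < y\<^sup>2"
  shows "p * q < 0"
proof (rule ccontr)
  assume "\<not> p * q < 0"
  then have pq: "0 \<le> real_of_int p * real_of_int q" by (metis of_int_0_le_iff of_int_mult not_less)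
  have "1 * 1 \<le> x\<^sup>2 * (of_int p)\<^sup>2"
    using sq_ge1[OF assms(4)] assms(1) by (intro mult_mono) (auto simp: one_le_power)
  also have "\<dots> \<le> x\<^sup>2 * (of_int p)\<^sup>2 + 2 * (x * y) * (real_of_int p * real_of_int q) + y\<^sup>2 * (of_int q)\<^sup>2"
    using pq assms by (simp add: mult_nonneg_nonneg)
  also have "\<dots> = (x * p + y * q)\<^sup>2"
    by (simp add: power2_eq_square algebra_simps)
  finally have "1 \<le> (x * p + y * q)\<^sup>2" by simp
  moreover have "y\<^sup>2 \<le> 1" using assms by (simp add: power_le_one)
  ultimately show False using assms(5) by linarith
qed

lemma base1:
  fixes x y :: real and c1 c2 c3 :: int
  assumes "1 \<le> x" "0 \<le> y" "y \<le> 1" "x\<^sup>2 + y\<^sup>2 = 2" "c1 \<noteq> 0 \<or> c2 \<noteq> 0 \<or> c3 \<noteq> 0"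
  shows "2 \<le> (x * c1 + y * c3)\<^sup>2 + (y * c1 + x * c2)\<^sup>2 + (y * c2 + x * c3)\<^sup>2"
proof -
  define S where "S = c1\<^sup>2 + c2\<^sup>2 + c3\<^sup>2"
  define P where "P = c1*c2 + c2*c3 + c1*c3"
  have S1: "S \<ge> 1" using assms(5) unfolding S_def
    using sq_ge1i[of c1] sq_ge1i[of c2] sq_ge1i[of c3] zero_le_power2[of c1] zero_le_power2[of c2] zero_le_power2[of c3]
    by linarith
  have e2: "2 * (S + P) = (c1+c2)\<^sup>2 + (c2+c3)\<^sup>2 + (c1+c3)\<^sup>2" unfolding S_def P_def by (simp add: power2_eq_square algebra_simps)
  have "c1+c2 \<noteq> 0 \<or> c2+c3 \<noteq> 0 \<or> c1+c3 \<noteq> 0" using assms(5) by linarith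
  then have pos: "(c1+c2)\<^sup>2 + (c2+c3)\<^sup>2 + (c1+c3)\<^sup>2 > 0"
    using sq_ge1i[of "c1+c2"] sq_ge1i[of "c2+c3"] sq_ge1i[of "c1+c3"] zero_le_power2[of "c1+c2"] zero_le_power2[of "c2+c3"] zero_le_power2[of "c1+c3"]
    by linarith
  have "2 * (S + P) > 0" using pos unfolding e2[symmetric] .
  then have SP: "S + P \<ge> 1" by simp
  have "0 \<le> (x - y)\<^sup>2" by simp
  moreover have "(x - y)\<^sup>2 = x\<^sup>2 + y\<^sup>2 - 2 * (x * y)" by (simp add: power2_eq_square algebra_simps)
  ultimately have xy: "x * y \<le> 1" using assms(4) by linarith
  have xy0: "0 \<le> x * y" using assms by simp
  have eq: "(x * c1 + y * c3)\<^sup>2 + (y * c1 + x * c2)\<^sup>2 + (y * c2 + x * c3)\<^sup>2 = (x\<^sup>2 + y\<^sup>2) * of_int S + 2 * (x * y) * of_int P"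
    unfolding S_def P_def by (simp add: power2_eq_square algebra_simps)
  have "2 \<le> 2 * real_of_int S + 2 * (x * y) * of_int P"
  proof (cases "P \<ge> 0")
    case True
    then have "0 \<le> 2 * (x * y) * of_int P" using xy0 by simp
    then show ?thesis using S1 by linarith
  next
    case False
    then have "(x*y) * of_int P \<ge> 1 * of_int P" using xy by (intro mult_right_mono_neg) auto
    then show ?thesis using SP by linarith
  qed
  then show ?thesis using eq assms(4) by simp
qed




lemma base2:
  fixes x y :: real and c1 c2 c3 t :: int
  assumes x1: "1 \<le> x" and y0: "0 \<le> y" and y1: "y \<le> 1" and t: "t = 1 \<or> t = -1"
  shows "y\<^sup>2 \<le> (x * c1 + y * c3)\<^sup>2 + (y * c1 + x * c2)\<^sup>2 + (y * c2 + x * c3 + y * t)\<^sup>2"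
proof (rule ccontr)
  assume "\<not> ?thesis"
  then have lt: "(x * c1 + y * c3)\<^sup>2 + (y * c1 + x * c2)\<^sup>2 + (y * c2 + x * c3 + y * t)\<^sup>2 < y\<^sup>2" by simp
  have lt': "(x * c1 + y * c3)\<^sup>2 + (x * c2 + y * c1)\<^sup>2 + (x * c3 + y * of_int (c2 + t))\<^sup>2 < y\<^sup>2"
    using lt by (simp add: algebra_simps)
  note Z = lt' zero_le_power2[of "x * c1 + y * c3"] zero_le_power2[of "x * c2 + y * c1"]
      zero_le_power2[of "x * c3 + y * of_int (c2 + t)"]
  have T1: "(x * c1 + y * c3)\<^sup>2 < y\<^sup>2" using Z by linarith
  have T2: "(x * c2 + y * c1)\<^sup>2 < y\<^sup>2" using Z by linarith
  have T3: "(x * c3 + y * of_int (c2 + t))\<^sup>2 < y\<^sup>2" using Z by linarith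
  have ysq: "y\<^sup>2 \<le> (y * of_int p)\<^sup>2" if "p \<noteq> 0" for p :: int
  proof -
    have "y\<^sup>2 * 1 \<le> y\<^sup>2 * (of_int p)\<^sup>2" using sq_ge1[OF that] by (intro mult_left_mono) auto
    then show ?thesis by (simp add: power_mult_distrib)
  qed
  show False
  proof (cases "c1 = 0")
    case True
    have "c2 = 0"
    proof (rule ccontr)
      assume "c2 \<noteq> 0"
      from signL[OF x1 y0 y1 this T2] True show False by simp
    qed
    have "c3 = 0"
    proof (rule ccontr)
      assume "c3 \<noteq> 0"
      from ysq[OF this] T1 True show False by simp
    qed
    from ysq[of t] t T3 \<open>c2 = 0\<close> \<open>c3 = 0\<close> show False by auto
  next
    case False
    have a13: "c1 * c3 < 0" by (rule signL[OF x1 y0 y1 False T1])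
    have "c2 \<noteq> 0"
    proof
      assume "c2 = 0"
      from ysq[OF False] T2 this show False by simp
    qed
    have a21: "c2 * c1 < 0" by (rule signL[OF x1 y0 y1 \<open>c2 \<noteq> 0\<close> T2])
    have "c3 \<noteq> 0" using a13 by auto
    have a3: "c3 * (c2 + t) < 0" by (rule signL[OF x1 y0 y1 \<open>c3 \<noteq> 0\<close> T3])
    have "c2 * c3 > 0" using a13 a21 by (auto simp: mult_less_0_iff zero_less_mult_iff)
    then have "(c2 > 0 \<and> c3 > 0) \<or> (c2 < 0 \<and> c3 < 0)" by (auto simp: zero_less_mult_iff)
    then have "c3 * (c2 + t) \<ge> 0"
    proof
      assume "c2 > 0 \<and> c3 > 0" then show ?thesis using t by (intro mult_nonneg_nonneg) auto
    next
      assume "c2 < 0 \<and> c3 < 0" then show ?thesis using t by (intro mult_nonpos_nonpos) auto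
    qed
    with a3 show False by simp
  qed
qed




lemma F_nonneg: "0 \<le> F a n c t" unfolding F_def by (intro sum_nonneg) auto

lemma big:
  fixes a y :: real and s t :: int
  assumes "1 \<le> a" "0 \<le> y" "y \<le> 1" "2 \<le> \<bar>s\<bar>" "t = 1 \<or> t = -1"
  shows "y\<^sup>2 \<le> (y * t - a * s)\<^sup>2"
proof -
  have s2: "(2::real) \<le> of_int \<bar>s\<bar>" using assms(4) by simp
  have "a * 2 \<le> a * \<bar>real_of_int s\<bar>" using s2 assms(1) by (intro mult_left_mono) auto
  then have as: "\<bar>a * s\<bar> \<ge> 2 * a" using assms(1) by (simp add: abs_mult mult.commute)
  have yt: "\<bar>y * t\<bar> = y" using assms by auto
  have "\<bar>a * s\<bar> \<le> \<bar>y * t - a * s\<bar> + \<bar>y * t\<bar>" by linarith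
  then have "\<bar>y\<bar> \<le> \<bar>y * t - a * s\<bar>" using as yt assms by linarith
  then show ?thesis by (simp add: abs_le_square_iff)
qed

lemma main_ind:
  assumes a1: "1 \<le> a" "a \<le> sqrt 2" and n: "n \<ge> 3"
  shows "(\<forall>c. (\<exists>k\<in>{1..n}. c k \<noteq> 0) \<longrightarrow> 2 \<le> F a n c 0) \<and>
         (\<forall>c t. (t = 1 \<or> t = -1) \<longrightarrow> (alpha_bar a)\<^sup>2 \<le> F a n c t)"
  using n
proof (induction n rule: nat_induct_at_least)
  case base
  note ab = ab_facts[OF a1]
  have s2: "a\<^sup>2 + (alpha_bar a)\<^sup>2 = 2" using ab by simp
  show ?case
  proof (intro conjI allI impI)
    fix c :: "nat \<Rightarrow> int" assume "\<exists>k\<in>{1..3}. c k \<noteq> 0"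
    then have "c 1 \<noteq> 0 \<or> c 2 \<noteq> 0 \<or> c 3 \<noteq> 0"
      by (auto simp: numeral_3_eq_3 numeral_2_eq_2 le_Suc_eq)
    from base1[OF a1(1) ab(1) ab(3) s2 this] show "2 \<le> F a 3 c 0" by (simp add: F3)
  next
    fix c :: "nat \<Rightarrow> int" and t :: int assume "t = 1 \<or> t = -1"
    from base2[OF a1(1) ab(1) ab(3) this] show "(alpha_bar a)\<^sup>2 \<le> F a 3 c t" by (simp add: F3)
  qed
next
  case (Suc n)
  note ab = ab_facts[OF a1]
  have s2: "a\<^sup>2 + (alpha_bar a)\<^sup>2 = 2" using ab by simp
  have a21: "1 \<le> a\<^sup>2" using a1 by (simp add: one_le_power)
  show ?case
  proof (intro conjI allI impI)
    fix c :: "nat \<Rightarrow> int" assume ex: "\<exists>k\<in>{1..Suc n}. c k \<noteq> 0"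
    define s where "s = c (Suc n)"
    have eq: "F a (Suc n) c 0 = F a n c s + (a * s)\<^sup>2"
      unfolding s_def using F_Suc[OF Suc.hyps, of a c 0] by (simp add: power2_eq_square)
    consider "s = 0" | "s = 1 \<or> s = -1" | "2 \<le> \<bar>s\<bar>" by linarith
    then show "2 \<le> F a (Suc n) c 0"
    proof cases
      case 1
      from ex obtain k where k: "k \<in> {1..Suc n}" "c k \<noteq> 0" by blast
      with 1 have "k \<noteq> Suc n" unfolding s_def by auto
      with k have "\<exists>k\<in>{1..n}. c k \<noteq> 0" by (intro bexI[of _ k]) auto
      then show ?thesis using Suc.IH eq 1 by simp
    next
      case 2
      then have "(alpha_bar a)\<^sup>2 \<le> F a n c s" using Suc.IH by blast
      moreover have "(a * s)\<^sup>2 = a\<^sup>2" using 2 by (auto simp: power2_eq_square)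
      ultimately show ?thesis using eq s2 by linarith
    next
      case 3
      have s2: "(2::real) \<le> \<bar>of_int s\<bar>" using 3 by linarith
      then have "(2::real) * 2 \<le> \<bar>of_int s\<bar> * \<bar>of_int s\<bar>" by (intro mult_mono) auto
      then have "(2::real) * 2 \<le> (of_int s)\<^sup>2" by (simp add: power2_eq_square)
      then have "1 * 4 \<le> a\<^sup>2 * (of_int s)\<^sup>2" using a21 by (intro mult_mono) auto
      then have "4 \<le> (a * s)\<^sup>2" by (simp add: power_mult_distrib)
      then show ?thesis using eq F_nonneg[of a n c s] by linarith
    qed
  next
    fix c :: "nat \<Rightarrow> int" and t :: int assume t: "t = 1 \<or> t = -1"
    define s where "s = c (Suc n)"
    have eq: "F a (Suc n) c t = F a n c s + (alpha_bar a * t - a * s)\<^sup>2"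
      unfolding s_def using F_Suc[OF Suc.hyps, of a c t] by simp
    consider "s = 0" | "s = 1 \<or> s = -1" | "2 \<le> \<bar>s\<bar>" by linarith
    then show "(alpha_bar a)\<^sup>2 \<le> F a (Suc n) c t"
    proof cases
      case 1
      then have "(alpha_bar a * t - a * s)\<^sup>2 = (alpha_bar a)\<^sup>2" using t by (auto simp: power2_eq_square)
      then show ?thesis using eq F_nonneg[of a n c s] by linarith
    next
      case 2
      then have "(alpha_bar a)\<^sup>2 \<le> F a n c s" using Suc.IH by blast
      then show ?thesis using eq zero_le_power2[of "alpha_bar a * t - a * s"] by linarith
    next
      case 3
      from big[OF a1(1) ab(1) ab(3) 3 t] show ?thesis using eq F_nonneg[of a n c s] by linarith
    qed
  qed
qed




lemma lat_Lv: "v \<in> lattice_of n (Dalpha_basis a) \<longleftrightarrow> (\<exists>c. v = Lv a n c)"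
  unfolding lattice_of_def Lv_def by auto

lemma vnorm_Lv: "vnorm n (Lv a n c) = sqrt (F a n c 0)"
  unfolding vnorm_def F_def by (intro arg_cong[where f=sqrt] sum.cong) auto

definition c0 :: "nat \<Rightarrow> int" where "c0 = (\<lambda>k. if k = 1 then 1 else 0)"

lemma Lv_c0: "n \<ge> 1 \<Longrightarrow> Lv a n c0 i = Dalpha_basis a 1 i"
proof -
  assume n: "n \<ge> 1"
  have "Lv a n c0 i = (\<Sum>k = 1..n. (if k = 1 then Dalpha_basis a k i else 0))"
    unfolding Lv_def c0_def by (rule sum.cong) auto
  also have "\<dots> = Dalpha_basis a 1 i" using n by (simp add: sum.delta')
  finally show ?thesis .
qed

lemma F_c0: assumes "1 \<le> a" "a \<le> sqrt 2" "n \<ge> 3" shows "F a n c0 0 = 2"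
  using assms(3)
proof (induction n rule: nat_induct_at_least)
  case base
  show ?case using ab_facts[OF assms(1,2)] by (simp add: F3 c0_def)
next
  case (Suc n)
  then show ?case using F_Suc[OF Suc.hyps, of a c0 0] by (simp add: c0_def)
qed

lemma lambda1_D:
  assumes "1 \<le> a" "a \<le> sqrt 2" "n \<ge> 3"
  shows "lambda1 n (Dalpha_basis a) = sqrt 2"
  unfolding lambda1_def
proof (rule cInf_eq_minimum)
  have "Lv a n c0 \<in> lattice_of n (Dalpha_basis a)" using lat_Lv by blast
  moreover have "Lv a n c0 1 \<noteq> 0" using assms by (simp add: Lv_c0 Dalpha_basis_def std_e_def)
  moreover have "vnorm n (Lv a n c0) = sqrt 2" using F_c0[OF assms] by (simp add: vnorm_Lv)
  moreover have "(1::nat) \<in> {1..n}" using assms by simp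
  ultimately show "sqrt 2 \<in> {vnorm n v |v. v \<in> lattice_of n (Dalpha_basis a) \<and> (\<exists>i\<in>{1..n}. v i \<noteq> 0)}"
    by (intro CollectI exI[of _ "Lv a n c0"]) auto
next
  fix x assume "x \<in> {vnorm n v |v. v \<in> lattice_of n (Dalpha_basis a) \<and> (\<exists>i\<in>{1..n}. v i \<noteq> 0)}"
  then obtain v where v: "x = vnorm n v" "v \<in> lattice_of n (Dalpha_basis a)" "\<exists>i\<in>{1..n}. v i \<noteq> 0"
    by blast
  then obtain c where vc: "v = Lv a n c" using lat_Lv by blast
  from v(3) obtain i where i: "i \<in> {1..n}" "Lv a n c i \<noteq> 0" using vc by blast
  have x: "x = vnorm n (Lv a n c)" using v vc by simp
  have "\<exists>k\<in>{1..n}. c k \<noteq> 0"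
  proof (rule ccontr)
    assume "\<not> ?thesis"
    then have "Lv a n c i = 0" unfolding Lv_def by (intro sum.neutral) auto
    with i show False by simp
  qed
  then have "2 \<le> F a n c 0" using main_ind[OF assms] by blast
  then show "sqrt 2 \<le> x" unfolding x vnorm_Lv by simp
qed

lemma std_coord: "i \<in> {1..n} \<Longrightarrow> (\<Sum>k = 1..n. of_int (c k) * std_e k i) = of_int (c i)"
proof -
  assume i: "i \<in> {1..n}"
  have "(\<Sum>k = 1..n. of_int (c k) * std_e k i) = (\<Sum>k = 1..n. if k = i then of_int (c k) else 0)"
    unfolding std_e_def by (rule sum.cong) auto
  also have "\<dots> = of_int (c i)" using i by (simp add: sum.delta)
  finally show ?thesis .
qed

lemma lambda1_std:
  assumes "n \<ge> 1"
  shows "lambda1 n std_e = 1"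
  unfolding lambda1_def
proof (rule cInf_eq_minimum)
  let ?v = "std_e 1"
  have "?v \<in> lattice_of n std_e" unfolding lattice_of_def
  proof (intro CollectI exI[of _ c0] ext)
    fix i
    have "(\<Sum>k = 1..n. of_int (c0 k) * std_e k i) = (\<Sum>k = 1..n. if k = 1 then std_e 1 i else 0)"
      unfolding c0_def by (rule sum.cong) auto
    also have "\<dots> = std_e 1 i" using assms by (simp add: sum.delta')
    finally show "std_e 1 i = (\<Sum>k = 1..n. of_int (c0 k) * std_e k i)" by simp
  qed
  moreover have "?v 1 \<noteq> 0" by (simp add: std_e_def)
  moreover have "vnorm n ?v = 1"
  proof -
    have "(\<Sum>i = 1..n. (std_e 1 i)\<^sup>2) = (\<Sum>i = 1..n. if i = 1 then 1 else 0)"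
      unfolding std_e_def by (rule sum.cong) auto
    also have "\<dots> = 1" using assms by (simp add: sum.delta)
    finally show ?thesis unfolding vnorm_def by simp
  qed
  moreover have "(1::nat) \<in> {1..n}" using assms by simp
  ultimately show "1 \<in> {vnorm n v |v. v \<in> lattice_of n std_e \<and> (\<exists>i\<in>{1..n}. v i \<noteq> 0)}"
    by (metis (mono_tags, lifting) mem_Collect_eq)
next
  fix x assume "x \<in> {vnorm n v |v. v \<in> lattice_of n std_e \<and> (\<exists>i\<in>{1..n}. v i \<noteq> 0)}"
  then obtain c i where x: "x = vnorm n (\<lambda>i. \<Sum>k = 1..n. of_int (c k) * std_e k i)"
     and i: "i \<in> {1..n}" "(\<Sum>k = 1..n. of_int (c k) * std_e k i) \<noteq> 0"
    unfolding lattice_of_def by blast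
  have ci: "c i \<noteq> 0" using i std_coord[OF i(1), of c] by simp
  have "(of_int (c i))\<^sup>2 \<le> (\<Sum>j = 1..n. (\<Sum>k = 1..n. of_int (c k) * std_e k j)\<^sup>2)"
  proof -
    have "(of_int (c i))\<^sup>2 = (\<Sum>k = 1..n. of_int (c k) * std_e k i)\<^sup>2" using std_coord[OF i(1)] by simp
    also have "\<dots> \<le> (\<Sum>j = 1..n. (\<Sum>k = 1..n. of_int (c k) * std_e k j)\<^sup>2)"
      using i(1) by (intro member_le_sum) auto
    finally show ?thesis .
  qed
  then have "1 \<le> (\<Sum>j = 1..n. (\<Sum>k = 1..n. of_int (c k) * std_e k j)\<^sup>2)" using sq_ge1[OF ci] by linarith
  then show "1 \<le> x" unfolding x vnorm_def by simp
qed

lemma covol_std: "covol n std_e = 1"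
proof -
  have "mat n n (\<lambda>(k, i). std_e (k + 1) (i + 1)) = (1\<^sub>m n :: real mat)"
    by (rule eq_matI) (auto simp: std_e_def)
  then show ?thesis unfolding covol_def by simp
qed

lemma det_B:
  assumes "n \<ge> 3"
  shows "det (mat n n (\<lambda>(k, i). Dalpha_basis a (k + 1) (i + 1))) = (a^3 + (alpha_bar a)^3) * (- a)^(n - 3)"
  using assms
proof (induction n rule: nat_induct_at_least)
  case base
  show ?case unfolding det3 by (simp add: Dalpha_basis_def std_e_def power3_eq_cube)
next
  case (Suc n)
  let ?f = "(\<lambda>(k, i). Dalpha_basis a (k + 1) (i + 1))"
  have z: "(\<Sum>i<n. ?f (i,n) * (-1)^(i+n) * det (mat n n (\<lambda>(i',j'). ?f (if i'<i then i' else Suc i', j')))) = 0"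
    using Suc.hyps by (intro sum.neutral) (auto simp: B_zero)
  have m: "mat n n (\<lambda>(i',j'). ?f (if i'<n then i' else Suc i', j')) = mat n n ?f"
    by (rule eq_matI) auto
  have "det (mat (Suc n) (Suc n) ?f) = ?f (n,n) * (-1)^(n+n) * det (mat n n ?f)"
    unfolding detM sum.lessThan_Suc z m by simp
  also have "?f (n,n) = - a" using Suc.hyps by (simp add: B_ge4)
  also have "(-1::real)^(n+n) = 1" by simp
  moreover obtain m where "n = m + 3" using Suc.hyps by (metis le_add_diff_inverse2)
  ultimately show ?case using Suc.IH by simp
qed




lemma sqrt2_pow: "sqrt 2 ^ n = 2 powr (real n / 2)"
proof -
  have "sqrt 2 ^ n = sqrt (2 ^ n)" by (simp add: real_sqrt_power)
  also have "\<dots> = (2 ^ n) powr (1/2)" by (simp add: powr_half_sqrt)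
  also have "\<dots> = (2 powr real n) powr (1/2)" by (simp add: powr_realpow)
  also have "\<dots> = 2 powr (real n / 2)" by (simp add: powr_powr)
  finally show ?thesis .
qed

lemma pow_minus: "(2::real) powr (- real n) = 1 / 2 ^ n"
  by (simp add: powr_minus powr_realpow divide_inverse)

lemma pow_half: "(2::real) powr (- real n / 2 - 1) = sqrt 2 ^ n / (2 ^ n * 2)"
proof -
  have "(2::real) powr (- real n / 2 - 1) = 2 powr (real n / 2) / 2 powr (real n + 1)"
    by (simp add: powr_diff [symmetric] field_simps)
  also have "2 powr (real n + 1) = (2::real) ^ n * 2" by (simp add: powr_add powr_realpow)
  finally show ?thesis by (simp add: sqrt2_pow)
qed




definition cs :: "real \<Rightarrow> real" where "cs a = a^3 + (alpha_bar a)^3"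

lemma cs_sq:
  fixes u v :: real assumes "u\<^sup>2 + v\<^sup>2 = 2"
  shows "(u^3 + v^3)\<^sup>2 = 8 - 6 * (u*v)\<^sup>2 + 2 * (u*v)^3"
proof -
  have "(u^3 + v^3)\<^sup>2 = (u\<^sup>2 + v\<^sup>2)^3 - 3 * (u*v)\<^sup>2 * (u\<^sup>2 + v\<^sup>2) + 2 * (u*v)^3"
    by (simp add: power2_eq_square power3_eq_cube algebra_simps)
  then show ?thesis using assms by simp
qed

lemma cs_pos: "1 \<le> a \<Longrightarrow> a \<le> sqrt 2 \<Longrightarrow> 0 < cs a"
  unfolding cs_def using ab_facts[of a] by (simp add: add_pos_nonneg)

lemma cs_mono:
  assumes "1 \<le> a" "a < b" "b \<le> sqrt 2"
  shows "cs a < cs b"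
proof -
  have a2: "a \<le> sqrt 2" and b1: "1 \<le> b" using assms by auto
  note A = ab_facts[OF assms(1) a2] and B = ab_facts[OF b1 assms(3)]
  define p where "p = a * alpha_bar a"
  define P where "P = b * alpha_bar b"
  have p0: "0 \<le> p" "0 \<le> P" unfolding p_def P_def using A B assms by auto
  have pp: "p\<^sup>2 = a\<^sup>2 * (2 - a\<^sup>2)" unfolding p_def using A by (simp add: power_mult_distrib)
  have PP: "P\<^sup>2 = b\<^sup>2 * (2 - b\<^sup>2)" unfolding P_def using B by (simp add: power_mult_distrib)
  have "a\<^sup>2 < b\<^sup>2" using assms by (intro power_strict_mono) auto
  moreover have "1 \<le> a\<^sup>2" using assms by (simp add: one_le_power)
  ultimately have "0 < (b\<^sup>2 - a\<^sup>2) * (a\<^sup>2 + b\<^sup>2 - 2)" by (intro mult_pos_pos) auto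
  moreover have "p\<^sup>2 - P\<^sup>2 = (b\<^sup>2 - a\<^sup>2) * (a\<^sup>2 + b\<^sup>2 - 2)" unfolding pp PP by (simp add: algebra_simps power2_eq_square)
  ultimately have "P\<^sup>2 < p\<^sup>2" by linarith
  then have Pp: "P < p" using p0 by (simp add: power_less_imp_less_base)
  have "0 \<le> (a - alpha_bar a)\<^sup>2" by simp
  moreover have "(a - alpha_bar a)\<^sup>2 = a\<^sup>2 + (alpha_bar a)\<^sup>2 - 2 * p" unfolding p_def by (simp add: power2_eq_square algebra_simps)
  ultimately have p1: "p \<le> 1" using A by linarith
  have sa: "(cs a)\<^sup>2 = 8 - 6 * p\<^sup>2 + 2 * p^3" unfolding cs_def p_def by (rule cs_sq) (use A in simp)
  have sb: "(cs b)\<^sup>2 = 8 - 6 * P\<^sup>2 + 2 * P^3" unfolding cs_def P_def by (rule cs_sq) (use B in simp)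
  have d: "(cs b)\<^sup>2 - (cs a)\<^sup>2 = 2 * (p - P) * (3 * (p + P) - (p * p + p * P + P * P))"
    unfolding sa sb by (simp add: power2_eq_square power3_eq_cube algebra_simps)
  have "p * p \<le> p" using mult_left_mono[of p 1 p] p0 p1 by simp
  moreover have "p * P \<le> p" using mult_left_mono[of P 1 p] p0 Pp p1 by simp
  moreover have "P * P \<le> P" using mult_left_mono[of P 1 P] p0 Pp p1 by simp
  ultimately have "0 < 3 * (p + P) - (p * p + p * P + P * P)" using p0 Pp by (smt (verit))
  then have "0 < 2 * (p - P) * (3 * (p + P) - (p * p + p * P + P * P))" using Pp by simp
  then have "(cs a)\<^sup>2 < (cs b)\<^sup>2" using d by linarith
  then show ?thesis using cs_pos[OF b1 assms(3)] by (simp add: power_less_imp_less_base)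
qed

lemma density_D:
  assumes "1 \<le> a" "a \<le> sqrt 2" "n \<ge> 3"
  shows "center_density n (Dalpha_basis a) = sqrt 2 ^ n / (2 ^ n * (cs a * a ^ (n - 3)))"
proof -
  have "covol n (Dalpha_basis a) = \<bar>cs a * (- a) ^ (n - 3)\<bar>"
    unfolding covol_def det_B[OF assms(3)] cs_def by simp
  also have "\<dots> = cs a * a ^ (n - 3)" using cs_pos[OF assms(1,2)] assms by (simp add: abs_mult power_abs)
  finally show ?thesis unfolding center_density_def lambda1_D[OF assms] by simp
qed

lemma D_mono:
  assumes "1 \<le> a" "a < b" "b \<le> sqrt 2" "n \<ge> 3"
  shows "center_density n (Dalpha_basis b) < center_density n (Dalpha_basis a)"
proof -
  have a2: "a \<le> sqrt 2" and b1: "1 \<le> b" using assms by auto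
  have "cs a * a ^ (n - 3) < cs b * a ^ (n - 3)" using cs_mono[OF assms(1-3)] assms(1) by simp
  also have "\<dots> \<le> cs b * b ^ (n - 3)" using cs_pos[OF b1 assms(3)] assms
    by (intro mult_left_mono power_mono) auto
  finally have lt: "cs a * a ^ (n - 3) < cs b * b ^ (n - 3)" .
  have pa: "0 < cs a * a ^ (n - 3)" using cs_pos[OF assms(1) a2] assms by simp
  have pb: "0 < cs b * b ^ (n - 3)" using pa lt by linarith
  have "(2::real) ^ n * (cs a * a ^ (n - 3)) < 2 ^ n * (cs b * b ^ (n - 3))" using lt by simp
  moreover have "0 < (2::real) ^ n * (cs b * b ^ (n - 3)) * (2 ^ n * (cs a * a ^ (n - 3)))"
    using pa pb by simp
  ultimately have "sqrt 2 ^ n / (2 ^ n * (cs b * b ^ (n - 3))) < sqrt 2 ^ n / (2 ^ n * (cs a * a ^ (n - 3)))"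
    by (intro divide_strict_left_mono) auto
  then show ?thesis using density_D[OF assms(1) a2 assms(4)] density_D[OF b1 assms(3,4)] by simp
qed

lemma D_one: "n \<ge> 3 \<Longrightarrow> center_density n (Dalpha_basis 1) = 2 powr (- real n / 2 - 1)"
proof -
  assume "n \<ge> 3"
  then have "center_density n (Dalpha_basis 1) = sqrt 2 ^ n / (2 ^ n * 2)"
    using density_D[of 1 n] by (simp add: cs_def alpha_bar_def)
  then show ?thesis unfolding pow_half .
qed

lemma D_sqrt2: "n \<ge> 3 \<Longrightarrow> center_density n (Dalpha_basis (sqrt 2)) = 2 powr (- real n)"
proof -
  assume n: "n \<ge> 3"
  have "cs (sqrt 2) * sqrt 2 ^ (n - 3) = sqrt 2 ^ 3 * sqrt 2 ^ (n - 3)" by (simp add: cs_def alpha_bar_def)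
  also have "\<dots> = sqrt 2 ^ n" using n by (simp add: power_add[symmetric])
  finally have e: "cs (sqrt 2) * sqrt 2 ^ (n - 3) = sqrt 2 ^ n" .
  show ?thesis using density_D[of "sqrt 2" n] n by (simp add: e pow_minus)
qed

lemma std_density: "n \<ge> 1 \<Longrightarrow> center_density n std_e = 2 powr (- real n)"
  unfolding center_density_def by (simp add: lambda1_std covol_std pow_minus)




theorem mainTheorem17:
  fixes n :: nat
  assumes "n \<ge> 3"
  shows "(\<forall>a::real. 1 \<le> a \<and> a \<le> sqrt 2 \<longrightarrow>
            center_density n std_e \<le> center_density n (Dalpha_basis a)
          \<and> center_density n (Dalpha_basis a) \<le> center_density n (Dalpha_basis 1)
          \<and> 2 powr (- real n) \<le> center_density n (Dalpha_basis a)
          \<and> center_density n (Dalpha_basis a) \<le> 2 powr (- real n / 2 - 1))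
       \<and> center_density n std_e = 2 powr (- real n)
       \<and> center_density n (Dalpha_basis 1) = 2 powr (- real n / 2 - 1)
       \<and> center_density n (Dalpha_basis (sqrt 2)) = 2 powr (- real n)
       \<and> (\<forall>a b::real. 1 \<le> a \<and> a < b \<and> b \<le> sqrt 2 \<longrightarrow>
            center_density n (Dalpha_basis b) < center_density n (Dalpha_basis a))"
proof -
  have std: "center_density n std_e = 2 powr (- real n)" using assms by (simp add: std_density)
  have one: "center_density n (Dalpha_basis 1) = 2 powr (- real n / 2 - 1)" using D_one[OF assms] .
  have s2: "center_density n (Dalpha_basis (sqrt 2)) = 2 powr (- real n)" using D_sqrt2[OF assms] .
  have mono: "\<forall>a b::real. 1 \<le> a \<and> a < b \<and> b \<le> sqrt 2 \<longrightarrow>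
            center_density n (Dalpha_basis b) < center_density n (Dalpha_basis a)"
    using D_mono assms by blast
  have rng: "center_density n (Dalpha_basis (sqrt 2)) \<le> center_density n (Dalpha_basis a)
        \<and> center_density n (Dalpha_basis a) \<le> center_density n (Dalpha_basis 1)"
    if a: "1 \<le> a" "a \<le> sqrt 2" for a :: real
  proof
    show "center_density n (Dalpha_basis (sqrt 2)) \<le> center_density n (Dalpha_basis a)"
    proof (cases "a = sqrt 2")
      case False then show ?thesis using D_mono[of a "sqrt 2" n] a assms by simp
    qed simp
    show "center_density n (Dalpha_basis a) \<le> center_density n (Dalpha_basis 1)"
    proof (cases "a = 1")
      case False then show ?thesis using D_mono[of 1 a n] a assms by simp
    qed simp
  qed
  show ?thesis using std one s2 mono rng by auto
qed


end
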